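(* Let $L:\mathbb{T}^d\times\mathbb{R}^d\to\mathbb{R}$ be continuous and satisfy $\lim_{|v|\to\infty}\inf_{x\in\mathbb{T}^d}L(x,v)/|v|=+\infty$, and let $\varphi:\mathbb{T}^d\to\mathbb{R}$ be Lipschitz continuous. For each $\varkappa>0$ and $x\in\mathbb{T}^d$ let $b_\varkappa[x]$, $p_\varkappa[x]$ be as in the context and choose \[\mathbbm{v}_\varkappa[x]\in\operatorname{Argmax}_{v\in\mathbb{R}^d}\big[-p_\varkappa[x]v-L(x+b_\varkappa[x],v)\big].\] Then there exists a constant $C_3$ such that $|\mathbbm{v}_\varkappa[x]|\le C_3$ for all $\varkappa>0$ and $x\in\mathbb{T}^d$.
   Context: $\mathbb{T}^d=\mathbb{R}^d/\mathbb{Z}^d$; $x+v$ is the translate of $x\in\mathbb{T}^d$ by $v\in\mathbb{R}^d$. $\varphi_\varkappa(x)=\inf\{\varphi(x+v)+\frac{1}{2\varkappa^2}|v|^2: v\in\mathbb{R}^d\}$; $b_\varkappa[x]\in\mathbb{R}^d$ is a chosen vector with $\varphi(x+b_\varkappa[x])+\frac{1}{2\varkappa^2}|b_\varkappa[x]|^2=\varphi_\varkappa(x)$, and $p_\varkappa[x]=\frac{1}{\varkappa^2}(-b_\varkappa[x])^\top$ (a row vector). *)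

theory Defs
  imports "HOL-Analysis.Analysis"
begin

text \<open>The torus T^d = R^d / Z^d is modelled by Z^d-periodic functions on R^d = real^'d.
  Translation x + v on the torus is vector addition.\<close>

definition int_vec :: "real^'d \<Rightarrow> bool" where
  "int_vec z \<longleftrightarrow> (\<forall>i. z $ i \<in> \<int>)"

definition periodic_fun :: "(real^'d \<Rightarrow> 'b) \<Rightarrow> bool" where
  "periodic_fun f \<longleftrightarrow> (\<forall>x z. int_vec z \<longrightarrow> f (x + z) = f x)"

definition phi_kappa :: "(real^'d \<Rightarrow> real) \<Rightarrow> real \<Rightarrow> real^'d \<Rightarrow> real" where
  "phi_kappa \<phi> \<kappa> x = (INF v. \<phi> (x + v) + (norm v)\<^sup>2 / (2 * \<kappa>\<^sup>2))"

definition p_kappa :: "real \<Rightarrow> real^'d \<Rightarrow> real^'d" where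
  "p_kappa \<kappa> b = (1 / \<kappa>\<^sup>2) *\<^sub>R (- b)"

end

theory Submission
  imports Defs
begin

lemma per_bdd:
  fixes f :: "real^'d \<Rightarrow> real"
  assumes c: "continuous_on UNIV f" and p: "periodic_fun f"
  shows "\<exists>B. \<forall>x. \<bar>f x\<bar> \<le> B"
proof -
  have "compact (f ` cbox (0::real^'d) 1)"
    by (rule compact_continuous_image[OF continuous_on_subset[OF c]]) auto
  then obtain B where B: "\<forall>y\<in>cbox (0::real^'d) 1. \<bar>f y\<bar> \<le> B"
    using compact_imp_bounded bounded_real by (metis image_eqI)
  show ?thesis
  proof (intro exI allI)
    fix x :: "real^'d"
    define z :: "real^'d" where "z = (\<chi> i. of_int (floor (x$i)))"
    have iz: "int_vec z" unfolding int_vec_def z_def by auto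
    have mem: "x - z \<in> cbox 0 1"
      unfolding mem_box_cart z_def
      by (auto simp: of_int_floor_le) (smt (verit) real_of_int_floor_add_one_gt)
    have "f x = f ((x - z) + z)" by simp
    also have "\<dots> = f (x - z)" using p iz unfolding periodic_fun_def by blast
    finally show "\<bar>f x\<bar> \<le> B" using B mem by simp
  qed
qed

theorem proposition5:
  fixes L :: "real^'d \<Rightarrow> real^'d \<Rightarrow> real"
    and \<phi> :: "real^'d \<Rightarrow> real"
    and b :: "real \<Rightarrow> real^'d \<Rightarrow> real^'d"
    and V :: "real \<Rightarrow> real^'d \<Rightarrow> real^'d"
  assumes L_cont: "continuous_on UNIV (\<lambda>(x, v). L x v)"
    and L_per: "\<forall>v. periodic_fun (\<lambda>x. L x v)"
    and L_superlin: "filterlim (\<lambda>v. (INF x. L x v) / norm v) at_top at_infinity"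
    and phi_per: "periodic_fun \<phi>"
    and phi_lip: "\<exists>K. K-lipschitz_on UNIV \<phi>"
    and b_min: "\<forall>\<kappa>>0. \<forall>x. \<phi> (x + b \<kappa> x) + (norm (b \<kappa> x))\<^sup>2 / (2 * \<kappa>\<^sup>2) = phi_kappa \<phi> \<kappa> x"
    and V_argmax: "\<forall>\<kappa>>0. \<forall>x. \<forall>w.
        - (p_kappa \<kappa> (b \<kappa> x) \<bullet> w) - L (x + b \<kappa> x) w
          \<le> - (p_kappa \<kappa> (b \<kappa> x) \<bullet> V \<kappa> x) - L (x + b \<kappa> x) (V \<kappa> x)"
  shows "\<exists>C3. \<forall>\<kappa>>0. \<forall>x. norm (V \<kappa> x) \<le> C3"
proof -
  obtain K where K: "K-lipschitz_on UNIV \<phi>" using phi_lip by blast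
  have K0: "0 \<le> K" using lipschitz_on_nonneg[OF K] .
  have lip: "\<phi> y \<ge> \<phi> x - K * norm (y - x)" for x y
    using lipschitz_onD[OF K, of y x] by (simp add: dist_norm dist_real_def abs_le_iff)
  have Lc: "continuous_on UNIV (\<lambda>x. L x v)" for v
    using continuous_on_compose2[OF L_cont continuous_on_Pair[OF continuous_on_id continuous_on_const, of UNIV v]]
    by auto
  have Lb: "\<exists>B. \<forall>x. \<bar>L x v\<bar> \<le> B" for v
    using per_bdd[OF Lc] L_per by blast
  obtain M0 where M0: "\<forall>x. \<bar>L x 0\<bar> \<le> M0" using Lb by blast
  have M00: "0 \<le> M0" using M0 by (meson abs_ge_zero order_trans)
  define P where "P = 2 * K"
  have pb: "norm (p_kappa \<kappa> (b \<kappa> x)) \<le> P" if k: "\<kappa> > 0" for \<kappa> x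
  proof -
    let ?b = "b \<kappa> x"
    have bdd: "bdd_below (range (\<lambda>v. \<phi> (x + v) + (norm v)\<^sup>2 / (2 * \<kappa>\<^sup>2)))"
    proof (rule bdd_belowI2)
      fix v
      have "\<phi> (x + v) \<ge> \<phi> x - K * norm v" using lip[of x "x+v"] by simp
      moreover have "(norm v)\<^sup>2 / (2 * \<kappa>\<^sup>2) - K * norm v \<ge> - (K^2 * \<kappa>^2 / 2)"
      proof -
        have "(norm v - K * \<kappa>^2)^2 \<ge> 0" by simp
        hence "(norm v)^2 - 2 * K * \<kappa>^2 * norm v + K^2 * \<kappa>^4 \<ge> 0"
          by (simp add: power2_eq_square algebra_simps power4_eq_xxxx)
        thus ?thesis using k by (simp add: field_simps power4_eq_xxxx power2_eq_square)
      qed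
      ultimately show "\<phi> x - K^2 * \<kappa>^2 / 2 \<le> \<phi> (x + v) + (norm v)\<^sup>2 / (2 * \<kappa>\<^sup>2)"
        by linarith
    qed
    have "phi_kappa \<phi> \<kappa> x \<le> \<phi> (x + 0) + (norm (0::real^'d))\<^sup>2 / (2 * \<kappa>\<^sup>2)"
      unfolding phi_kappa_def by (rule cINF_lower[OF bdd]) auto
    hence h1: "\<phi> (x + ?b) + (norm ?b)\<^sup>2 / (2 * \<kappa>\<^sup>2) \<le> \<phi> x"
      using b_min k by simp
    have h2: "\<phi> (x + ?b) \<ge> \<phi> x - K * norm ?b" using lip[of x "x + ?b"] by simp
    have "(norm ?b)\<^sup>2 / (2 * \<kappa>\<^sup>2) \<le> K * norm ?b" using h1 h2 by linarith
    hence "(norm ?b)\<^sup>2 \<le> 2 * K * \<kappa>\<^sup>2 * norm ?b" using k by (simp add: field_simps)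
    hence nb: "norm ?b \<le> 2 * K * \<kappa>\<^sup>2"
      by (cases "norm ?b = 0") (auto simp: power2_eq_square mult.commute K0)
    have "norm (p_kappa \<kappa> ?b) = norm ?b / \<kappa>\<^sup>2" unfolding p_kappa_def using k by simp
    also have "\<dots> \<le> 2 * K" using nb k by (simp add: divide_le_eq)
    finally show ?thesis unfolding P_def .
  qed
  have "eventually (\<lambda>v. (INF x. L x v) / norm v \<ge> P + M0 + 1) at_infinity"
    using L_superlin by (simp add: filterlim_at_top)
  then obtain R where R: "\<And>v. R \<le> norm v \<Longrightarrow> (INF x. L x v) / norm v \<ge> P + M0 + 1"
    unfolding eventually_at_infinity by blast
  show ?thesis
  proof (intro exI allI impI)
    fix \<kappa> :: real and x assume k: "\<kappa> > 0"
    let ?p = "p_kappa \<kappa> (b \<kappa> x)" and ?y = "x + b \<kappa> x" and ?V = "V \<kappa> x"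
    have "- (?p \<bullet> 0) - L ?y 0 \<le> - (?p \<bullet> ?V) - L ?y ?V" using V_argmax k by blast
    hence "L ?y ?V \<le> - (?p \<bullet> ?V) + L ?y 0" by simp
    moreover have "- (?p \<bullet> ?V) \<le> P * norm ?V"
      using norm_cauchy_schwarz[of "- ?p" ?V] pb[OF k] 
      by (smt (verit) inner_minus_left mult_right_mono norm_ge_zero norm_minus_cancel)
    ultimately have up: "L ?y ?V \<le> P * norm ?V + M0" using M0 by (smt (verit))
    show "norm ?V \<le> max R 1"
    proof (rule ccontr)
      assume "\<not> ?thesis"
      hence nV: "norm ?V > R" "norm ?V > 1" by auto
      obtain B where "\<forall>z. \<bar>L z ?V\<bar> \<le> B" using Lb by blast
      hence "bdd_below (range (\<lambda>z. L z ?V))" by (meson abs_le_D2 bdd_belowI2 minus_le_iff)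
      hence lo: "(INF z. L z ?V) \<le> L ?y ?V" by (rule cINF_lower) simp
      have "(INF z. L z ?V) / norm ?V \<ge> P + M0 + 1" using R nV by simp
      hence "(INF z. L z ?V) \<ge> (P + M0 + 1) * norm ?V" using nV by (auto simp: le_divide_eq split: if_splits)
      moreover have "(P + M0 + 1) * norm ?V > P * norm ?V + M0"
        using nV M00 by (smt (verit) mult_le_cancel_left1 distrib_right)
      ultimately show False using lo up by linarith
    qed
  qed
qed

end
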